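(* Let $V=\{1,\dots,n\}$, $\mathcal{H}=\bigotimes_{v\in V}\mathcal{H}^v$, $k\ge1$, and let $\{h_X\}_{X\in E_k}$, $\{f_X\}_{X\in E_k}$ be Hermitian operators with $h_X,f_X$ supported on $X$. For real parameter vectors $\vec a=(a_X)_{X\in E_k}$, $\vec b=(b_X)_{X\in E_k}$ set $H_{\vec a}=\sum_X a_Xh_X$, $\mathcal{F}_{\vec b}=\sum_X b_Xf_X$, $\rho_{\vec a}=e^{-\beta H_{\vec a}}/\mathrm{tr}(e^{-\beta H_{\vec a}})$, with $\beta,\tau\in\mathbb{R}$ fixed. Then for all $w_1\in\mathcal{C}_{m_1}$, $w_2\in\mathcal{C}_{m_2}$ such that $w_1\oplus w_2\notin\mathcal{G}_{m_1+m_2}$, $$\mathcal{D}_{w_2}\tilde{\mathcal{D}}_{w_1}\log\big[\mathrm{tr}(e^{-\tau\mathcal{F}_{\vec b}}\rho_{\vec a})\big]\Big|_{\vec a=\vec 0,\vec b=\vec 0}=0.$$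
   Context: $E_k=\{X\subseteq V:|X|\le k\}$. A cluster is a finite multiset $w=\{X_1,\dots,X_{|w|}\}$ of elements of $E_k$; $\mathcal{C}_m$ is the set of clusters with $|w|=m$; $\oplus$ is multiset union; $V_w=X_1\cup\dots\cup X_{|w|}$. A cluster $w$ is connected if there is no decomposition $w=w_1\oplus w_2$ with $w_1,w_2$ nonempty and $V_{w_1}\cap V_{w_2}=\emptyset$; $\mathcal{G}_m$ is the set of connected clusters of size $m$. For a cluster $w$, $\mathcal{D}_w=\prod_{X\in w}\partial/\partial a_X$ and $\tilde{\mathcal{D}}_w=\prod_{X\in w}\partial/\partial b_X$ (products with multiplicity). "Supported on $X$" means acting as identity outside the factors in $X$. *)

theory Defs
  imports "HOL-Analysis.Analysis" "HOL-Library.Multiset" "HOL-Library.FuncSet"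
begin

text \<open>Finite-dimensional tensor product: site v in V carries C^(d v).
  Basis states of the full space are configurations s in PiE V ({..< d v}).
  Operators are matrices indexed by configurations.\<close>

type_synonym cfg = "nat \<Rightarrow> nat"
type_synonym op = "cfg \<Rightarrow> cfg \<Rightarrow> complex"

definition cfgs :: "nat set \<Rightarrow> (nat \<Rightarrow> nat) \<Rightarrow> cfg set" where
  "cfgs V d = PiE V (\<lambda>v. {..<d v})"

definition mone :: "op" where
  "mone = (\<lambda>s t. if s = t then 1 else 0)"

definition mmul :: "nat set \<Rightarrow> (nat \<Rightarrow> nat) \<Rightarrow> op \<Rightarrow> op \<Rightarrow> op" where
  "mmul V d A B = (\<lambda>s t. \<Sum>u\<in>cfgs V d. A s u * B u t)"

fun mpow :: "nat set \<Rightarrow> (nat \<Rightarrow> nat) \<Rightarrow> op \<Rightarrow> nat \<Rightarrow> op" where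
  "mpow V d A 0 = mone"
| "mpow V d A (Suc k) = mmul V d A (mpow V d A k)"

definition mexp :: "nat set \<Rightarrow> (nat \<Rightarrow> nat) \<Rightarrow> op \<Rightarrow> op" where
  "mexp V d A = (\<lambda>s t. \<Sum>k. mpow V d A k s t / of_nat (fact k))"

definition mtrace :: "nat set \<Rightarrow> (nat \<Rightarrow> nat) \<Rightarrow> op \<Rightarrow> complex" where
  "mtrace V d A = (\<Sum>s\<in>cfgs V d. A s s)"

definition hermitian :: "nat set \<Rightarrow> (nat \<Rightarrow> nat) \<Rightarrow> op \<Rightarrow> bool" where
  "hermitian V d A \<longleftrightarrow> (\<forall>s\<in>cfgs V d. \<forall>t\<in>cfgs V d. A t s = cnj (A s t))"

text \<open>A is supported on X: A = A_X \<otimes> identity on the factors outside X.\<close>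
definition supported_on :: "nat set \<Rightarrow> (nat \<Rightarrow> nat) \<Rightarrow> nat set \<Rightarrow> op \<Rightarrow> bool" where
  "supported_on V d X A \<longleftrightarrow> (\<exists>g. \<forall>s\<in>cfgs V d. \<forall>t\<in>cfgs V d.
      A s t = (if (\<forall>v\<in>V - X. s v = t v) then g (restrict s X) (restrict t X) else 0))"

definition Ek :: "nat set \<Rightarrow> nat \<Rightarrow> nat set set" where
  "Ek V k = {X. X \<subseteq> V \<and> card X \<le> k}"

definition clusters :: "nat set \<Rightarrow> nat \<Rightarrow> nat \<Rightarrow> nat set multiset set" where
  "clusters V k m = {w. set_mset w \<subseteq> Ek V k \<and> size w = m}"

definition Vw :: "nat set multiset \<Rightarrow> nat set" where
  "Vw w = \<Union> (set_mset w)"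

definition connected_cluster :: "nat set multiset \<Rightarrow> bool" where
  "connected_cluster w \<longleftrightarrow> \<not> (\<exists>w1 w2. w = w1 + w2 \<and> w1 \<noteq> {#} \<and> w2 \<noteq> {#} \<and> Vw w1 \<inter> Vw w2 = {})"

definition conn_clusters :: "nat set \<Rightarrow> nat \<Rightarrow> nat \<Rightarrow> nat set multiset set" where
  "conn_clusters V k m = {w \<in> clusters V k m. connected_cluster w}"

definition pda :: "nat set \<Rightarrow> ((nat set \<Rightarrow> real) \<Rightarrow> (nat set \<Rightarrow> real) \<Rightarrow> real)
    \<Rightarrow> (nat set \<Rightarrow> real) \<Rightarrow> (nat set \<Rightarrow> real) \<Rightarrow> real" where
  "pda X F = (\<lambda>a b. deriv (\<lambda>t. F (a(X := t)) b) (a X))"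

definition pdb :: "nat set \<Rightarrow> ((nat set \<Rightarrow> real) \<Rightarrow> (nat set \<Rightarrow> real) \<Rightarrow> real)
    \<Rightarrow> (nat set \<Rightarrow> real) \<Rightarrow> (nat set \<Rightarrow> real) \<Rightarrow> real" where
  "pdb X F = (\<lambda>a b. deriv (\<lambda>t. F a (b(X := t))) (b X))"

text \<open>D_w and tilde D_w for a cluster listed in some order (the function is smooth,
  so the order is irrelevant; the statement quantifies over all orderings).\<close>
definition Da where "Da ws F = foldr pda ws F"
definition Db where "Db ws F = foldr pdb ws F"

definition Hop :: "nat set \<Rightarrow> nat \<Rightarrow> (nat set \<Rightarrow> op) \<Rightarrow> (nat set \<Rightarrow> real) \<Rightarrow> op" where
  "Hop V k h a = (\<lambda>s t. \<Sum>X\<in>Ek V k. of_real (a X) * h X s t)"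

end

theory Submission
  imports Defs
begin
lemma finite_cfgs: "finite V \<Longrightarrow> finite (cfgs V d)"
  unfolding cfgs_def by (intro finite_PiE) auto

lemma mmul_assoc: "mmul V d (mmul V d A B) C = mmul V d A (mmul V d B C)"
  unfolding mmul_def
  by (auto intro!: ext simp: sum_distrib_left sum_distrib_right mult.assoc intro: sum.swap)

lemma mmul_mone_left: "finite V \<Longrightarrow> s \<in> cfgs V d \<Longrightarrow> mmul V d mone A s t = A s t"
proof -
  assume a: "finite V" "s \<in> cfgs V d"
  have "mmul V d mone A s t = (\<Sum>u\<in>cfgs V d. if s = u then A u t else 0)"
    unfolding mmul_def mone_def by (rule sum.cong) auto
  also have "\<dots> = A s t" using a by (simp add: finite_cfgs)
  finally show ?thesis .
qed

lemma mmul_mone_right: "finite V \<Longrightarrow> t \<in> cfgs V d \<Longrightarrow> mmul V d A mone s t = A s t"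
proof -
  assume a: "finite V" "t \<in> cfgs V d"
  have "mmul V d A mone s t = (\<Sum>u\<in>cfgs V d. if u = t then A s u else 0)"
    unfolding mmul_def mone_def by (rule sum.cong) auto
  also have "\<dots> = A s t" using a by (simp add: finite_cfgs)
  finally show ?thesis .
qed

lemma mmul_cong: "(\<And>u. u \<in> cfgs V d \<Longrightarrow> A s u = A' s u) \<Longrightarrow> (\<And>u. u \<in> cfgs V d \<Longrightarrow> B u t = B' u t)
  \<Longrightarrow> mmul V d A B s t = mmul V d A' B' s t"
  unfolding mmul_def by (intro sum.cong) auto

lemma mmul_add_left: "mmul V d (\<lambda>s t. A s t + B s t) C s t = mmul V d A C s t + mmul V d B C s t"
  unfolding mmul_def by (simp add: distrib_right sum.distrib)

lemma mmul_add_right: "mmul V d C (\<lambda>s t. A s t + B s t) s t = mmul V d C A s t + mmul V d C B s t"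
  unfolding mmul_def by (simp add: distrib_left sum.distrib)

lemma mmul_scal_left: "mmul V d (\<lambda>s t. c * A s t) B s t = c * mmul V d A B s t"
  unfolding mmul_def by (simp add: sum_distrib_left mult.assoc)

lemma mmul_scal_right: "mmul V d A (\<lambda>s t. c * B s t) s t = c * mmul V d A B s t"
  unfolding mmul_def by (simp add: sum_distrib_left mult.left_commute)

lemma mmul_sum_right: "mmul V d C (\<lambda>s t. \<Sum>i\<in>F. f i s t) s t = (\<Sum>i\<in>F. mmul V d C (f i) s t)"
  unfolding mmul_def by (simp add: sum_distrib_left sum.swap[of _ F])

lemma mpow_comm:
  assumes fin: "finite V" and comm: "\<And>s t. s \<in> cfgs V d \<Longrightarrow> t \<in> cfgs V d \<Longrightarrow> mmul V d B A s t = mmul V d A B s t"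
  shows "s \<in> cfgs V d \<Longrightarrow> t \<in> cfgs V d \<Longrightarrow> mmul V d B (mpow V d A i) s t = mmul V d (mpow V d A i) B s t"
proof (induction i arbitrary: s t)
  case 0
  then show ?case by (simp add: mmul_mone_left mmul_mone_right fin)
next
  case (Suc i)
  have "mmul V d B (mpow V d A (Suc i)) s t = mmul V d (mmul V d B A) (mpow V d A i) s t"
    by (simp add: mmul_assoc)
  also have "\<dots> = mmul V d (mmul V d A B) (mpow V d A i) s t"
    by (rule mmul_cong) (use Suc comm in auto)
  also have "\<dots> = mmul V d A (mmul V d B (mpow V d A i)) s t"
    by (simp add: mmul_assoc)
  also have "\<dots> = mmul V d A (mmul V d (mpow V d A i) B) s t"
    by (rule mmul_cong) (use Suc in auto)
  also have "\<dots> = mmul V d (mpow V d A (Suc i)) B s t"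
    by (simp add: mmul_assoc)
  finally show ?case .
qed

lemma pascal_sum:
  fixes Y :: "nat \<Rightarrow> 'a::comm_semiring_1"
  shows "(\<Sum>i\<le>n. of_nat (n choose i) * (Y (Suc i) + Y i)) = (\<Sum>i\<le>Suc n. of_nat (Suc n choose i) * Y i)"
proof -
  have e1: "(\<Sum>i\<le>n. of_nat (n choose i) * Y i) = (\<Sum>i\<le>Suc n. of_nat (n choose i) * Y i)"
    by (simp add: binomial_eq_0)
  also have "\<dots> = Y 0 + (\<Sum>i\<le>n. of_nat (n choose Suc i) * Y (Suc i))"
    by (subst sum.atMost_Suc_shift) simp
  finally have e1': "(\<Sum>i\<le>n. of_nat (n choose i) * Y i) = Y 0 + (\<Sum>i\<le>n. of_nat (n choose Suc i) * Y (Suc i))" .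
  have "(\<Sum>i\<le>Suc n. of_nat (Suc n choose i) * Y i) = Y 0 + (\<Sum>i\<le>n. of_nat (Suc n choose Suc i) * Y (Suc i))"
    by (subst sum.atMost_Suc_shift) simp
  also have "\<dots> = Y 0 + (\<Sum>i\<le>n. of_nat (n choose i) * Y (Suc i)) + (\<Sum>i\<le>n. of_nat (n choose Suc i) * Y (Suc i))"
    by (simp add: distrib_right sum.distrib add.assoc)
  finally show ?thesis using e1' by (simp add: distrib_left sum.distrib add_ac)
qed

lemma mpow_binom:
  assumes fin: "finite V" and comm: "\<And>s t. s \<in> cfgs V d \<Longrightarrow> t \<in> cfgs V d \<Longrightarrow> mmul V d B A s t = mmul V d A B s t"
  shows "s \<in> cfgs V d \<Longrightarrow> t \<in> cfgs V d \<Longrightarrow> mpow V d (\<lambda>s t. A s t + B s t) n s t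
     = (\<Sum>i\<le>n. of_nat (n choose i) * mmul V d (mpow V d A i) (mpow V d B (n - i)) s t)"
proof (induction n arbitrary: s t)
  case 0
  then show ?case by (simp add: mmul_mone_left fin)
next
  case (Suc n)
  define P where "P = (\<lambda>s t. A s t + B s t)"
  define Y where "Y = (\<lambda>j. mmul V d (mpow V d A j) (mpow V d B (Suc n - j)) s t)"
  have "mpow V d P (Suc n) s t = mmul V d P (\<lambda>u t. \<Sum>i\<le>n. of_nat (n choose i) * mmul V d (mpow V d A i) (mpow V d B (n - i)) u t) s t"
    by (simp, rule mmul_cong) (use Suc in \<open>auto simp: P_def\<close>)
  also have "\<dots> = (\<Sum>i\<le>n. of_nat (n choose i) * (mmul V d A (mmul V d (mpow V d A i) (mpow V d B (n - i))) s t
       + mmul V d B (mmul V d (mpow V d A i) (mpow V d B (n - i))) s t))"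
    by (simp add: mmul_sum_right mmul_scal_right P_def mmul_add_left)
  also have "\<dots> = (\<Sum>i\<le>n. of_nat (n choose i) * (Y (Suc i) + Y i))"
  proof (rule sum.cong[OF refl])
    fix i assume i: "i \<in> {..n}"
    have 1: "mmul V d A (mmul V d (mpow V d A i) (mpow V d B (n - i))) s t = Y (Suc i)"
      by (simp add: Y_def flip: mmul_assoc)
    have "mmul V d B (mmul V d (mpow V d A i) (mpow V d B (n - i))) s t
        = mmul V d (mmul V d B (mpow V d A i)) (mpow V d B (n - i)) s t"
      by (simp add: mmul_assoc)
    also have "\<dots> = mmul V d (mmul V d (mpow V d A i) B) (mpow V d B (n - i)) s t"
      by (rule mmul_cong) (use Suc mpow_comm[OF fin comm] in auto)
    also have "\<dots> = Y i" using i by (simp add: Y_def mmul_assoc Suc_diff_le)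
    finally show "of_nat (n choose i) * (mmul V d A (mmul V d (mpow V d A i) (mpow V d B (n - i))) s t
       + mmul V d B (mmul V d (mpow V d A i) (mpow V d B (n - i))) s t) = of_nat (n choose i) * (Y (Suc i) + Y i)"
      using 1 by simp
  qed
  also have "\<dots> = (\<Sum>i\<le>Suc n. of_nat (Suc n choose i) * Y i)" by (rule pascal_sum)
  finally show ?case by (simp add: P_def Y_def)
qed

lemma mpow_bound:
  assumes fin: "finite V"
  shows "s \<in> cfgs V d \<Longrightarrow> t \<in> cfgs V d \<Longrightarrow>
    norm (mpow V d A k s t) \<le> (\<Sum>u\<in>cfgs V d. \<Sum>v\<in>cfgs V d. norm (A u v)) ^ k"
proof (induction k arbitrary: s t)
  case 0 then show ?case by (simp add: mone_def)
next
  case (Suc k)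
  let ?M = "\<Sum>u\<in>cfgs V d. \<Sum>v\<in>cfgs V d. norm (A u v)"
  have "norm (mpow V d A (Suc k) s t) \<le> (\<Sum>u\<in>cfgs V d. norm (A s u) * norm (mpow V d A k u t))"
    unfolding mpow.simps mmul_def by (rule order_trans[OF norm_sum]) (simp add: norm_mult)
  also have "\<dots> \<le> (\<Sum>u\<in>cfgs V d. norm (A s u) * ?M ^ k)"
    by (rule sum_mono, rule mult_left_mono) (use Suc in auto)
  also have "\<dots> = (\<Sum>u\<in>cfgs V d. norm (A s u)) * ?M ^ k" by (simp add: sum_distrib_right)
  also have "\<dots> \<le> ?M * ?M ^ k"
    by (rule mult_right_mono, rule member_le_sum[where f = "\<lambda>u. \<Sum>v\<in>cfgs V d. norm (A u v)"])
       (use Suc fin finite_cfgs in \<open>auto intro!: sum_nonneg zero_le_power\<close>)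
  finally show ?case by simp
qed

lemma summable_mexp_norm:
  assumes fin: "finite V" and s: "s \<in> cfgs V d" and t: "t \<in> cfgs V d"
  shows "summable (\<lambda>k. norm (mpow V d A k s t / of_nat (fact k)))"
proof (rule summable_comparison_test[OF _ summable_exp])
  let ?M = "\<Sum>u\<in>cfgs V d. \<Sum>v\<in>cfgs V d. norm (A u v)"
  show "\<exists>N. \<forall>n\<ge>N. norm (norm (mpow V d A n s t / of_nat (fact n))) \<le> inverse (fact n) * ?M ^ n"
  proof (intro exI allI impI)
    fix n :: nat
    have "norm (mpow V d A n s t) \<le> ?M ^ n" by (rule mpow_bound[OF fin s t])
    then show "norm (norm (mpow V d A n s t / of_nat (fact n))) \<le> inverse (fact n) * ?M ^ n"
      by (simp add: norm_divide divide_simps)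
  qed
qed

lemma summable_mexp:
  assumes fin: "finite V" and s: "s \<in> cfgs V d" and t: "t \<in> cfgs V d"
  shows "summable (\<lambda>k. mpow V d A k s t / of_nat (fact k))"
  using summable_norm_cancel[OF summable_mexp_norm[OF assms]] .

lemma mexp_add:
  assumes fin: "finite V" and comm: "\<And>s t. s \<in> cfgs V d \<Longrightarrow> t \<in> cfgs V d \<Longrightarrow> mmul V d B A s t = mmul V d A B s t"
    and s: "s \<in> cfgs V d" and t: "t \<in> cfgs V d"
  shows "mexp V d (\<lambda>s t. A s t + B s t) s t = mmul V d (mexp V d A) (mexp V d B) s t"
proof -
  define a where "a = (\<lambda>u k. mpow V d A k s u / of_nat (fact k))"
  define b where "b = (\<lambda>u k. mpow V d B k u t / of_nat (fact k))"
  have sa: "summable (\<lambda>k. norm (a u k))" if "u \<in> cfgs V d" for u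
    using summable_mexp_norm[OF fin s that] by (simp add: a_def)
  have sb: "summable (\<lambda>k. norm (b u k))" if "u \<in> cfgs V d" for u
    using summable_mexp_norm[OF fin that t] by (simp add: b_def)
  have "mmul V d (mexp V d A) (mexp V d B) s t = (\<Sum>u\<in>cfgs V d. (\<Sum>k. a u k) * (\<Sum>k. b u k))"
    by (simp add: mmul_def mexp_def a_def b_def)
  also have "\<dots> = (\<Sum>u\<in>cfgs V d. \<Sum>n. \<Sum>i\<le>n. a u i * b u (n - i))"
    by (rule sum.cong[OF refl], rule Cauchy_product) (use sa sb in auto)
  also have "\<dots> = (\<Sum>n. \<Sum>u\<in>cfgs V d. \<Sum>i\<le>n. a u i * b u (n - i))"
    by (rule suminf_sum[symmetric], rule summable_Cauchy_product) (use sa sb in auto)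
  also have "\<dots> = (\<Sum>n. mpow V d (\<lambda>s t. A s t + B s t) n s t / of_nat (fact n))"
  proof (rule suminf_cong)
    fix n
    have "(\<Sum>u\<in>cfgs V d. \<Sum>i\<le>n. a u i * b u (n - i))
        = (\<Sum>i\<le>n. mmul V d (mpow V d A i) (mpow V d B (n - i)) s t / (fact i * fact (n - i)))"
      by (simp add: a_def b_def mmul_def sum_divide_distrib sum.swap[of _ "cfgs V d"])
    also have "\<dots> = (\<Sum>i\<le>n. of_nat (n choose i) * mmul V d (mpow V d A i) (mpow V d B (n - i)) s t / fact n)"
    proof (rule sum.cong[OF refl])
      fix i assume "i \<in> {..n}"
      then have "i \<le> n" by simp
      then show "mmul V d (mpow V d A i) (mpow V d B (n - i)) s t / (fact i * fact (n - i))
        = of_nat (n choose i) * mmul V d (mpow V d A i) (mpow V d B (n - i)) s t / fact n"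
        by (simp add: binomial_fact)
    qed
    also have "\<dots> = mpow V d (\<lambda>s t. A s t + B s t) n s t / fact n"
      by (simp add: mpow_binom[OF fin comm s t] sum_divide_distrib)
    finally show "(\<Sum>u\<in>cfgs V d. \<Sum>i\<le>n. a u i * b u (n - i)) = mpow V d (\<lambda>s t. A s t + B s t) n s t / of_nat (fact n)"
      by simp
  qed
  finally show ?thesis by (simp add: mexp_def)
qed

lemma mpow_cong:
  assumes "\<And>s t. s \<in> cfgs V d \<Longrightarrow> t \<in> cfgs V d \<Longrightarrow> A s t = A' s t"
  shows "s \<in> cfgs V d \<Longrightarrow> t \<in> cfgs V d \<Longrightarrow> mpow V d A k s t = mpow V d A' k s t"
proof (induction k arbitrary: s t)
  case 0 then show ?case by simp
next
  case (Suc k) then show ?case by (simp, intro mmul_cong) (use assms in auto)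
qed

lemma mexp_cong:
  assumes "\<And>s t. s \<in> cfgs V d \<Longrightarrow> t \<in> cfgs V d \<Longrightarrow> A s t = A' s t"
  shows "s \<in> cfgs V d \<Longrightarrow> t \<in> cfgs V d \<Longrightarrow> mexp V d A s t = mexp V d A' s t"
  unfolding mexp_def using mpow_cong[OF assms] by simp

lemma mexp_zero: "mexp V d (\<lambda>s t. 0) s t = mone s t"
proof -
  have "(\<lambda>k. mpow V d (\<lambda>s t. 0) k s t / of_nat (fact k)) = (\<lambda>k. if k = 0 then mone s t else 0)"
    by (rule ext, case_tac k) (auto simp: mmul_def)
  moreover have "(\<lambda>k. if k = 0 then mone s t else 0) sums mone s t"
    using sums_single[of 0 "\<lambda>_. mone s t"] by simp
  ultimately show ?thesis unfolding mexp_def by (simp add: sums_iff)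
qed

definition adj :: "op \<Rightarrow> op" where "adj A = (\<lambda>s t. cnj (A t s))"

lemma adj_mmul: "adj (mmul V d A B) = mmul V d (adj B) (adj A)"
  unfolding adj_def mmul_def by (auto intro!: ext simp: mult.commute)

lemma mpow_adj:
  assumes fin: "finite V"
  shows "s \<in> cfgs V d \<Longrightarrow> t \<in> cfgs V d \<Longrightarrow> mpow V d (adj A) k s t = cnj (mpow V d A k t s)"
proof (induction k arbitrary: s t)
  case 0 then show ?case by (simp add: mone_def)
next
  case (Suc k)
  have "mpow V d (adj A) (Suc k) s t = mmul V d (adj A) (adj (mpow V d A k)) s t"
    by (simp, rule mmul_cong) (use Suc in \<open>auto simp: adj_def\<close>)
  also have "\<dots> = cnj (mmul V d (mpow V d A k) A t s)"
    by (subst adj_mmul[symmetric]) (simp add: adj_def)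
  also have "\<dots> = cnj (mpow V d A (Suc k) t s)"
    using mpow_comm[OF fin, where A=A and B=A] Suc.prems by simp
  finally show ?case .
qed

lemma mexp_adj:
  assumes fin: "finite V" and s: "s \<in> cfgs V d" and t: "t \<in> cfgs V d"
  shows "mexp V d (adj A) s t = cnj (mexp V d A t s)"
proof -
  have "(\<lambda>k. mpow V d A k t s / of_nat (fact k)) sums mexp V d A t s"
    unfolding mexp_def using summable_mexp[OF fin t s] by (rule summable_sums)
  then have "(\<lambda>k. cnj (mpow V d A k t s / of_nat (fact k))) sums cnj (mexp V d A t s)"
    by (simp only: sums_cnj)
  then have "(\<lambda>k. mpow V d (adj A) k s t / of_nat (fact k)) sums cnj (mexp V d A t s)"
    by (simp add: mpow_adj[OF fin s t])
  then show ?thesis unfolding mexp_def by (rule sums_unique[symmetric])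
qed

lemma hermitian_mexp:
  assumes fin: "finite V" and h: "hermitian V d A" and s: "s \<in> cfgs V d" and t: "t \<in> cfgs V d"
  shows "adj (mexp V d A) s t = mexp V d A s t"
proof -
  have "adj (mexp V d A) s t = mexp V d (adj A) s t"
    using mexp_adj[OF fin s t] by (simp add: adj_def)
  also have "\<dots> = mexp V d A s t"
  proof (rule mexp_cong[OF _ s t])
    fix s t assume "s \<in> cfgs V d" "t \<in> cfgs V d"
    then have "A t s = cnj (A s t)" using h unfolding hermitian_def by blast
    then show "adj A s t = A s t" unfolding adj_def by simp
  qed
  finally show ?thesis .
qed

lemma mexp_half:
  assumes fin: "finite V" and s: "s \<in> cfgs V d" and t: "t \<in> cfgs V d"
  shows "mexp V d A s t = mmul V d (mexp V d (\<lambda>s t. A s t / 2)) (mexp V d (\<lambda>s t. A s t / 2)) s t"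
  using mexp_add[OF fin _ s t, of "\<lambda>s t. A s t / 2" "\<lambda>s t. A s t / 2"] by simp

lemma mexp_inv:
  assumes fin: "finite V" and s: "s \<in> cfgs V d" and t: "t \<in> cfgs V d"
  shows "mmul V d (mexp V d (\<lambda>s t. - A s t)) (mexp V d A) s t = mone s t"
proof -
  have "mmul V d (mexp V d (\<lambda>s t. - A s t)) (mexp V d A) s t = mexp V d (\<lambda>s t. - A s t + A s t) s t"
  proof (rule mexp_add[OF fin _ s t, symmetric])
    fix s t
    show "mmul V d A (\<lambda>s t. - A s t) s t = mmul V d (\<lambda>s t. - A s t) A s t"
      using mmul_scal_left[of V d "-1" A A s t] mmul_scal_right[of V d A "-1" A s t] by simp
  qed
  then show ?thesis by (simp add: mexp_zero)
qed

lemma mtrace_comm: "mtrace V d (mmul V d A B) = mtrace V d (mmul V d B A)"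
  unfolding mtrace_def mmul_def by (subst sum.swap) (simp add: mult.commute)

lemma mtrace_cong: "(\<And>s. s \<in> cfgs V d \<Longrightarrow> A s s = B s s) \<Longrightarrow> mtrace V d A = mtrace V d B"
  unfolding mtrace_def by (rule sum.cong) auto

lemma mtrace_adj: "mtrace V d (mmul V d (adj M) M) = of_real (\<Sum>s\<in>cfgs V d. \<Sum>u\<in>cfgs V d. (norm (M u s))\<^sup>2)"
  unfolding mtrace_def mmul_def adj_def
  by (simp only: of_real_sum, intro sum.cong refl) (simp add: complex_norm_square mult.commute del: of_real_power)

lemma hermitian_scal:
  assumes h: "hermitian V d K" and c: "cnj c = c"
  shows "hermitian V d (\<lambda>s t. c * K s t)"
  unfolding hermitian_def
proof (intro ballI)
  fix s t assume "s \<in> cfgs V d" "t \<in> cfgs V d"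
  then have "K t s = cnj (K s t)" using h unfolding hermitian_def by blast
  then show "c * K t s = cnj (c * K s t)" using c by simp
qed

lemma hermitian_half: "hermitian V d K \<Longrightarrow> hermitian V d (\<lambda>s t. K s t / 2)"
  using hermitian_scal[of V d K "1/2"] by simp

lemma trace_pos:
  assumes fin: "finite V" and ne: "cfgs V d \<noteq> {}" and hK: "hermitian V d K" and hL: "hermitian V d L"
  shows "Im (mtrace V d (mmul V d (mexp V d L) (mexp V d K))) = 0 \<and> Re (mtrace V d (mmul V d (mexp V d L) (mexp V d K))) > 0"
proof -
  define Kh where "Kh = (\<lambda>s t. K s t / 2)"
  define Lh where "Lh = (\<lambda>s t. L s t / 2)"
  define Eh where "Eh = mexp V d Kh"
  define Fh where "Fh = mexp V d Lh"
  define M where "M = mmul V d Fh Eh"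
  have hKh: "hermitian V d Kh" unfolding Kh_def by (rule hermitian_half[OF hK])
  have hLh: "hermitian V d Lh" unfolding Lh_def by (rule hermitian_half[OF hL])
  have "mtrace V d (mmul V d (mexp V d L) (mexp V d K)) = mtrace V d (mmul V d (mmul V d Fh Fh) (mmul V d Eh Eh))"
  proof (intro mtrace_cong mmul_cong)
    fix s u assume s: "s \<in> cfgs V d" and u: "u \<in> cfgs V d"
    show "mexp V d L s u = mmul V d Fh Fh s u" using mexp_half[OF fin s u, of L] by (simp add: Fh_def Lh_def)
    show "mexp V d K u s = mmul V d Eh Eh u s" using mexp_half[OF fin u s, of K] by (simp add: Eh_def Kh_def)
  qed
  also have "\<dots> = mtrace V d (mmul V d (mmul V d (mmul V d Fh Fh) Eh) Eh)"
    by (simp add: mmul_assoc)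
  also have "\<dots> = mtrace V d (mmul V d Eh (mmul V d (mmul V d Fh Fh) Eh))"
    by (rule mtrace_comm)
  also have "\<dots> = mtrace V d (mmul V d (mmul V d Eh Fh) M)"
    by (simp add: mmul_assoc M_def)
  also have "\<dots> = mtrace V d (mmul V d (adj M) M)"
  proof (intro mtrace_cong mmul_cong refl)
    fix s u assume s: "s \<in> cfgs V d" and u: "u \<in> cfgs V d"
    have "adj M s u = mmul V d (adj Eh) (adj Fh) s u" by (simp add: M_def adj_mmul)
    also have "\<dots> = mmul V d Eh Fh s u"
      by (intro mmul_cong) (use s u hermitian_mexp[OF fin hKh] hermitian_mexp[OF fin hLh] in \<open>auto simp: Eh_def Fh_def\<close>)
    finally show "mmul V d Eh Fh s u = adj M s u" by simp
  qed
  also have "\<dots> = of_real (\<Sum>s\<in>cfgs V d. \<Sum>u\<in>cfgs V d. (norm (M u s))\<^sup>2)"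
    by (rule mtrace_adj)
  finally have tr: "mtrace V d (mmul V d (mexp V d L) (mexp V d K)) = of_real (\<Sum>s\<in>cfgs V d. \<Sum>u\<in>cfgs V d. (norm (M u s))\<^sup>2)" .
  have pos: "(\<Sum>s\<in>cfgs V d. \<Sum>u\<in>cfgs V d. (norm (M u s))\<^sup>2) > 0"
  proof (rule ccontr)
    assume "\<not> ?thesis"
    then have "(\<Sum>s\<in>cfgs V d. \<Sum>u\<in>cfgs V d. (norm (M u s))\<^sup>2) = 0"
      by (simp add: not_less order_antisym sum_nonneg)
    then have z: "\<forall>s\<in>cfgs V d. \<forall>u\<in>cfgs V d. M u s = 0"
      using fin finite_cfgs by (simp add: sum_nonneg_eq_0_iff sum_nonneg)
    obtain s0 where s0: "s0 \<in> cfgs V d" using ne by auto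
    define P where "P = mexp V d (\<lambda>s t. - Lh s t)"
    define Q where "Q = mexp V d (\<lambda>s t. - Kh s t)"
    have "mmul V d (mmul V d P Fh) (mmul V d Eh Q) s0 s0 = mmul V d mone mone s0 s0"
    proof (intro mmul_cong)
      fix u assume u: "u \<in> cfgs V d"
      show "mmul V d P Fh s0 u = mone s0 u" unfolding P_def Fh_def by (rule mexp_inv[OF fin s0 u])
      show "mmul V d Eh Q u s0 = mone u s0" unfolding Q_def Eh_def
        using mexp_inv[OF fin u s0, of "\<lambda>s t. - Kh s t"] by simp
    qed
    also have "\<dots> = mone s0 s0" by (rule mmul_mone_left[OF fin s0])
    also have "\<dots> = 1" by (simp add: mone_def)
    finally have one: "mmul V d (mmul V d P Fh) (mmul V d Eh Q) s0 s0 = 1" .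
    have "mmul V d (mmul V d P Fh) (mmul V d Eh Q) s0 s0 = mmul V d P (mmul V d M Q) s0 s0"
      by (simp add: mmul_assoc M_def)
    also have "\<dots> = 0" unfolding mmul_def using z by simp
    finally show False using one by simp
  qed
  show ?thesis using tr pos by simp
qed

definition mrg :: "nat set \<Rightarrow> cfg \<Rightarrow> cfg \<Rightarrow> cfg" where
  "mrg W x y = (\<lambda>v. if v \<in> W then x v else y v)"

definition tens :: "nat set \<Rightarrow> nat set \<Rightarrow> op \<Rightarrow> op \<Rightarrow> op" where
  "tens W1 W2 X Y = (\<lambda>s t. X (restrict s W1) (restrict t W1) * Y (restrict s W2) (restrict t W2))"

lemma restrict_cfgs: "s \<in> cfgs V d \<Longrightarrow> W \<subseteq> V \<Longrightarrow> restrict s W \<in> cfgs W d"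
  unfolding cfgs_def by (auto simp: PiE_def Pi_def)

lemma mrg_cfgs: "x \<in> cfgs W1 d \<Longrightarrow> y \<in> cfgs W2 d \<Longrightarrow> W1 \<union> W2 = V \<Longrightarrow> mrg W1 x y \<in> cfgs V d"
  unfolding cfgs_def mrg_def by (auto simp: PiE_def Pi_def extensional_def)

lemma restrict_mrg1: "x \<in> cfgs W1 d \<Longrightarrow> restrict (mrg W1 x y) W1 = x"
  unfolding cfgs_def mrg_def by (auto simp: PiE_def extensional_def restrict_def)

lemma restrict_mrg2:
  assumes "y \<in> cfgs W2 d" "W1 \<inter> W2 = {}" shows "restrict (mrg W1 x y) W2 = y"
proof (rule ext)
  fix v show "restrict (mrg W1 x y) W2 v = y v"
    using assms by (cases "v \<in> W2") (auto simp: mrg_def restrict_def cfgs_def PiE_def extensional_def)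
qed

lemma mrg_restrict: "s \<in> cfgs V d \<Longrightarrow> W1 \<union> W2 = V \<Longrightarrow> mrg W1 (restrict s W1) (restrict s W2) = s"
  unfolding cfgs_def mrg_def by (auto simp: PiE_def extensional_def restrict_def)

lemma sum_split:
  assumes U: "W1 \<union> W2 = V" and D: "W1 \<inter> W2 = {}"
  shows "(\<Sum>u\<in>cfgs V d. f u) = (\<Sum>x\<in>cfgs W1 d. \<Sum>y\<in>cfgs W2 d. f (mrg W1 x y))"
proof -
  have "(\<Sum>u\<in>cfgs V d. f u) = (\<Sum>p\<in>cfgs W1 d \<times> cfgs W2 d. f (mrg W1 (fst p) (snd p)))"
  proof (rule sum.reindex_bij_witness[where j = "\<lambda>u. (restrict u W1, restrict u W2)" and i = "\<lambda>p. mrg W1 (fst p) (snd p)"])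
    fix u assume u: "u \<in> cfgs V d"
    show "mrg W1 (fst (restrict u W1, restrict u W2)) (snd (restrict u W1, restrict u W2)) = u"
      using mrg_restrict[OF u U] by simp
    show "(restrict u W1, restrict u W2) \<in> cfgs W1 d \<times> cfgs W2 d"
      using restrict_cfgs[OF u] U by auto
    show "f (mrg W1 (fst (restrict u W1, restrict u W2)) (snd (restrict u W1, restrict u W2))) = f u"
      using mrg_restrict[OF u U] by simp
  next
    fix p assume p: "p \<in> cfgs W1 d \<times> cfgs W2 d"
    then show "(restrict (mrg W1 (fst p) (snd p)) W1, restrict (mrg W1 (fst p) (snd p)) W2) = p"
      using restrict_mrg1 restrict_mrg2 D by (cases p) auto
    show "mrg W1 (fst p) (snd p) \<in> cfgs V d" using p mrg_cfgs U by (cases p) auto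
  qed
  also have "\<dots> = (\<Sum>x\<in>cfgs W1 d. \<Sum>y\<in>cfgs W2 d. f (mrg W1 x y))"
    by (simp add: sum.cartesian_product case_prod_beta)
  finally show ?thesis .
qed

lemma tens_mmul:
  assumes U: "W1 \<union> W2 = V" and D: "W1 \<inter> W2 = {}"
  shows "mmul V d (tens W1 W2 X Y) (tens W1 W2 X' Y') s t = tens W1 W2 (mmul W1 d X X') (mmul W2 d Y Y') s t"
proof -
  have "mmul V d (tens W1 W2 X Y) (tens W1 W2 X' Y') s t
     = (\<Sum>x\<in>cfgs W1 d. \<Sum>y\<in>cfgs W2 d. X (restrict s W1) x * Y (restrict s W2) y * (X' x (restrict t W1) * Y' y (restrict t W2)))"
    unfolding mmul_def tens_def
    by (subst sum_split[OF U D]) (intro sum.cong refl, simp add: restrict_mrg1 restrict_mrg2 D)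
  also have "\<dots> = (\<Sum>x\<in>cfgs W1 d. X (restrict s W1) x * X' x (restrict t W1)) * (\<Sum>y\<in>cfgs W2 d. Y (restrict s W2) y * Y' y (restrict t W2))"
    by (simp add: sum_product mult_ac)
  finally show ?thesis unfolding tens_def mmul_def .
qed

lemma tens_trace:
  assumes U: "W1 \<union> W2 = V" and D: "W1 \<inter> W2 = {}"
  shows "mtrace V d (tens W1 W2 X Y) = mtrace W1 d X * mtrace W2 d Y"
  unfolding mtrace_def tens_def
  by (subst sum_split[OF U D]) (simp add: restrict_mrg1 restrict_mrg2 D sum_product cong: sum.cong)

lemma tens_mone:
  assumes U: "W1 \<union> W2 = V" and s: "s \<in> cfgs V d" and t: "t \<in> cfgs V d"
  shows "tens W1 W2 mone mone s t = mone s t"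
proof -
  have "(restrict s W1 = restrict t W1 \<and> restrict s W2 = restrict t W2) = (s = t)"
    using mrg_restrict[OF s U] mrg_restrict[OF t U] by metis
  then show ?thesis unfolding tens_def mone_def by auto
qed

lemma tens_swap: "tens W1 W2 X Y s t = tens W2 W1 Y X s t"
  unfolding tens_def by simp

lemma mpow_tens:
  assumes fin: "finite V" and U: "W1 \<union> W2 = V" and D: "W1 \<inter> W2 = {}"
  shows "s \<in> cfgs V d \<Longrightarrow> t \<in> cfgs V d \<Longrightarrow> mpow V d (tens W1 W2 X mone) k s t = tens W1 W2 (mpow W1 d X k) mone s t"
proof (induction k arbitrary: s t)
  case 0 then show ?case using tens_mone[OF U] by simp
next
  case (Suc k)
  have fin2: "finite W2" using fin U by auto
  have "mpow V d (tens W1 W2 X mone) (Suc k) s t = mmul V d (tens W1 W2 X mone) (tens W1 W2 (mpow W1 d X k) mone) s t"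
    by (simp, rule mmul_cong) (use Suc in auto)
  also have "\<dots> = tens W1 W2 (mmul W1 d X (mpow W1 d X k)) (mmul W2 d mone mone) s t"
    by (rule tens_mmul[OF U D])
  also have "\<dots> = tens W1 W2 (mpow W1 d X (Suc k)) mone s t"
  proof -
    have "restrict s W2 \<in> cfgs W2 d" using restrict_cfgs[OF Suc.prems(1)] U by auto
    then have "mmul W2 d mone mone (restrict s W2) (restrict t W2) = mone (restrict s W2) (restrict t W2)"
      by (rule mmul_mone_left[OF fin2])
    then show ?thesis by (simp add: tens_def)
  qed
  finally show ?case .
qed

lemma mexp_tens:
  assumes fin: "finite V" and U: "W1 \<union> W2 = V" and D: "W1 \<inter> W2 = {}"
    and s: "s \<in> cfgs V d" and t: "t \<in> cfgs V d"
  shows "mexp V d (tens W1 W2 X mone) s t = tens W1 W2 (mexp W1 d X) mone s t"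
proof -
  have fin1: "finite W1" using fin U by auto
  have s1: "restrict s W1 \<in> cfgs W1 d" and t1: "restrict t W1 \<in> cfgs W1 d"
    using restrict_cfgs[OF s] restrict_cfgs[OF t] U by auto
  have "mexp V d (tens W1 W2 X mone) s t = (\<Sum>k. mpow W1 d X k (restrict s W1) (restrict t W1) / of_nat (fact k) * mone (restrict s W2) (restrict t W2))"
  proof -
    have "mexp V d (tens W1 W2 X mone) s t = (\<Sum>k. tens W1 W2 (mpow W1 d X k) mone s t / of_nat (fact k))"
      unfolding mexp_def by (simp add: mpow_tens[OF fin U D s t])
    then show ?thesis by (simp add: tens_def)
  qed
  also have "\<dots> = tens W1 W2 (mexp W1 d X) mone s t"
    unfolding tens_def mexp_def by (rule suminf_mult2[symmetric, OF summable_mexp[OF fin1 s1 t1]])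
  finally show ?thesis .
qed

lemma tens_mmul_units:
  assumes fin: "finite V" and U: "W1 \<union> W2 = V" and D: "W1 \<inter> W2 = {}"
    and s: "s \<in> cfgs V d" and t: "t \<in> cfgs V d"
  shows "mmul V d (tens W1 W2 X mone) (tens W1 W2 mone Y) s t = tens W1 W2 X Y s t"
    and "mmul V d (tens W1 W2 mone Y) (tens W1 W2 X mone) s t = tens W1 W2 X Y s t"
proof -
  have fin1: "finite W1" and fin2: "finite W2" using fin U by auto
  have s1: "restrict s W1 \<in> cfgs W1 d" and t1: "restrict t W1 \<in> cfgs W1 d"
    and s2: "restrict s W2 \<in> cfgs W2 d" and t2: "restrict t W2 \<in> cfgs W2 d"
    using restrict_cfgs[OF s] restrict_cfgs[OF t] U by auto
  show "mmul V d (tens W1 W2 X mone) (tens W1 W2 mone Y) s t = tens W1 W2 X Y s t"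
    unfolding tens_mmul[OF U D]
    using mmul_mone_right[OF fin1 t1, of X] mmul_mone_left[OF fin2 s2, of Y]
    by (simp add: tens_def)
  show "mmul V d (tens W1 W2 mone Y) (tens W1 W2 X mone) s t = tens W1 W2 X Y s t"
    unfolding tens_mmul[OF U D]
    using mmul_mone_left[OF fin1 s1, of X] mmul_mone_right[OF fin2 t2, of Y]
    by (simp add: tens_def)
qed

lemma mexp_tens_sum:
  assumes fin: "finite V" and U: "W1 \<union> W2 = V" and D: "W1 \<inter> W2 = {}"
    and s: "s \<in> cfgs V d" and t: "t \<in> cfgs V d"
  shows "mexp V d (\<lambda>s t. tens W1 W2 X mone s t + tens W1 W2 mone Y s t) s t = tens W1 W2 (mexp W1 d X) (mexp W2 d Y) s t"
proof -
  have U': "W2 \<union> W1 = V" and D': "W2 \<inter> W1 = {}" using U D by auto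
  have "mexp V d (\<lambda>s t. tens W1 W2 X mone s t + tens W1 W2 mone Y s t) s t
      = mmul V d (mexp V d (tens W1 W2 X mone)) (mexp V d (tens W1 W2 mone Y)) s t"
  proof (rule mexp_add[OF fin _ s t])
    fix s t assume s: "s \<in> cfgs V d" and t: "t \<in> cfgs V d"
    show "mmul V d (tens W1 W2 mone Y) (tens W1 W2 X mone) s t = mmul V d (tens W1 W2 X mone) (tens W1 W2 mone Y) s t"
      using tens_mmul_units[OF fin U D s t] by simp
  qed
  also have "\<dots> = mmul V d (tens W1 W2 (mexp W1 d X) mone) (tens W1 W2 mone (mexp W2 d Y)) s t"
  proof (rule mmul_cong)
    fix u assume u: "u \<in> cfgs V d"
    show "mexp V d (tens W1 W2 X mone) s u = tens W1 W2 (mexp W1 d X) mone s u"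
      by (rule mexp_tens[OF fin U D s u])
    have "tens W1 W2 mone Y = tens W2 W1 Y mone" unfolding tens_def by (simp add: mult.commute)
    then have "mexp V d (tens W1 W2 mone Y) u t = mexp V d (tens W2 W1 Y mone) u t"
      by simp
    also have "\<dots> = tens W2 W1 (mexp W2 d Y) mone u t"
      by (rule mexp_tens[OF fin U' D' u t])
    finally show "mexp V d (tens W1 W2 mone Y) u t = tens W1 W2 mone (mexp W2 d Y) u t"
      unfolding tens_def by (simp add: mult.commute)
  qed
  also have "\<dots> = tens W1 W2 (mexp W1 d X) (mexp W2 d Y) s t"
    by (rule tens_mmul_units(1)[OF fin U D s t])
  finally show ?thesis .
qed

lemma supp_tens:
  assumes sup: "supported_on V d X A" and XW: "X \<subseteq> W1" and U: "W1 \<union> W2 = V" and D: "W1 \<inter> W2 = {}"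
    and y0: "y0 \<in> cfgs W2 d" and s: "s \<in> cfgs V d" and t: "t \<in> cfgs V d"
  shows "A s t = tens W1 W2 (\<lambda>x x'. A (mrg W1 x y0) (mrg W1 x' y0)) mone s t"
proof -
  obtain g where g: "\<forall>s\<in>cfgs V d. \<forall>t\<in>cfgs V d. A s t = (if \<forall>v\<in>V - X. s v = t v then g (restrict s X) (restrict t X) else 0)"
    using sup unfolding supported_on_def by blast
  define p where "p = mrg W1 (restrict s W1) y0"
  define q where "q = mrg W1 (restrict t W1) y0"
  have s1: "restrict s W1 \<in> cfgs W1 d" using restrict_cfgs[OF s] U by auto
  have t1: "restrict t W1 \<in> cfgs W1 d" using restrict_cfgs[OF t] U by auto
  have p: "p \<in> cfgs V d" using mrg_cfgs[OF s1 y0 U] p_def by simp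
  have q: "q \<in> cfgs V d" using mrg_cfgs[OF t1 y0 U] q_def by simp
  have rp: "restrict p X = restrict s X" using XW unfolding p_def mrg_def restrict_def by (auto intro!: ext)
  have rq: "restrict q X = restrict t X" using XW unfolding q_def mrg_def restrict_def by (auto intro!: ext)
  have agree_pq: "(\<forall>v\<in>V - X. p v = q v) = (\<forall>v\<in>W1 - X. s v = t v)"
    using U D unfolding p_def q_def mrg_def by auto
  have r2: "(restrict s W2 = restrict t W2) = (\<forall>v\<in>W2. s v = t v)"
    by (auto simp: fun_eq_iff restrict_def)
  have agree_st: "(\<forall>v\<in>V - X. s v = t v) = ((\<forall>v\<in>W1 - X. s v = t v) \<and> restrict s W2 = restrict t W2)"
    unfolding r2 using U D XW by blast
  have Apq: "A p q = (if \<forall>v\<in>W1 - X. s v = t v then g (restrict s X) (restrict t X) else 0)"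
    using g p q rp rq agree_pq by simp
  have Ast: "A s t = (if (\<forall>v\<in>W1 - X. s v = t v) \<and> restrict s W2 = restrict t W2 then g (restrict s X) (restrict t X) else 0)"
    using g s t agree_st by simp
  show ?thesis unfolding tens_def mone_def using Apq Ast by (simp add: p_def q_def)
qed

definition Kp :: "nat set \<Rightarrow> real \<Rightarrow> nat set set \<Rightarrow> (nat set \<Rightarrow> op) \<Rightarrow> (nat set \<Rightarrow> real) \<Rightarrow> cfg \<Rightarrow> op" where
  "Kp W c S h a z = (\<lambda>x x'. of_real c * (\<Sum>X\<in>S. of_real (a X) * h X (mrg W x z) (mrg W x' z)))"

lemma tens_Kp:
  assumes fin: "finite S" and U: "W1 \<union> W2 = V" and D: "W1 \<inter> W2 = {}"
    and y0: "y0 \<in> cfgs W2 d" and s: "s \<in> cfgs V d" and t: "t \<in> cfgs V d"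
    and sup: "\<And>X. X \<in> S \<Longrightarrow> supported_on V d X (h X) \<and> X \<subseteq> W1"
  shows "of_real c * (\<Sum>X\<in>S. of_real (a X) * h X s t) = tens W1 W2 (Kp W1 c S h a y0) mone s t"
proof -
  have "(\<Sum>X\<in>S. of_real (a X) * h X s t) = (\<Sum>X\<in>S. of_real (a X) * tens W1 W2 (\<lambda>x x'. h X (mrg W1 x y0) (mrg W1 x' y0)) mone s t)"
    by (intro sum.cong refl) (use supp_tens[OF _ _ U D y0 s t] sup in auto)
  then show ?thesis unfolding tens_def Kp_def by (simp add: sum_distrib_left mult_ac)
qed

lemma hop_split:
  assumes finE: "finite E" and S: "S1 \<union> S2 \<subseteq> E" and SD: "S1 \<inter> S2 = {}"
    and a0: "\<And>X. X \<notin> S1 \<union> S2 \<Longrightarrow> a X = 0"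
    and U: "W1 \<union> W2 = V" and D: "W1 \<inter> W2 = {}"
    and x0: "x0 \<in> cfgs W1 d" and y0: "y0 \<in> cfgs W2 d" and s: "s \<in> cfgs V d" and t: "t \<in> cfgs V d"
    and sup1: "\<And>X. X \<in> S1 \<Longrightarrow> supported_on V d X (h X) \<and> X \<subseteq> W1"
    and sup2: "\<And>X. X \<in> S2 \<Longrightarrow> supported_on V d X (h X) \<and> X \<subseteq> W2"
  shows "of_real c * (\<Sum>X\<in>E. of_real (a X) * h X s t)
     = tens W1 W2 (Kp W1 c S1 h a y0) mone s t + tens W1 W2 mone (Kp W2 c S2 h a x0) s t"
proof -
  have f1: "finite S1" and f2: "finite S2" using finE S finite_subset by auto
  have U': "W2 \<union> W1 = V" and D': "W2 \<inter> W1 = {}" using U D by auto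
  have "(\<Sum>X\<in>E. of_real (a X) * h X s t) = (\<Sum>X\<in>S1 \<union> S2. of_real (a X) * h X s t)"
    by (rule sum.mono_neutral_right[OF finE S]) (use a0 in auto)
  also have "\<dots> = (\<Sum>X\<in>S1. of_real (a X) * h X s t) + (\<Sum>X\<in>S2. of_real (a X) * h X s t)"
    by (rule sum.union_disjoint[OF f1 f2 SD])
  finally have e: "of_real c * (\<Sum>X\<in>E. of_real (a X) * h X s t)
     = of_real c * (\<Sum>X\<in>S1. of_real (a X) * h X s t) + of_real c * (\<Sum>X\<in>S2. of_real (a X) * h X s t)"
    by (simp add: distrib_left)
  have "of_real c * (\<Sum>X\<in>S2. of_real (a X) * h X s t) = tens W2 W1 (Kp W2 c S2 h a x0) mone s t"
    by (rule tens_Kp[OF f2 U' D' x0 s t sup2])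
  also have "\<dots> = tens W1 W2 mone (Kp W2 c S2 h a x0) s t" by (simp add: tens_def mult.commute)
  finally show ?thesis using e tens_Kp[OF f1 U D y0 s t sup1] by simp
qed

lemma hermitian_Kp:
  assumes U: "W1 \<union> W2 = V" and z: "z \<in> cfgs W2 d"
    and her: "\<And>X. X \<in> S \<Longrightarrow> hermitian V d (h X)"
  shows "hermitian W1 d (Kp W1 c S h a z)"
  unfolding hermitian_def
proof (intro ballI)
  fix x x' assume x: "x \<in> cfgs W1 d" and x': "x' \<in> cfgs W1 d"
  have m: "mrg W1 x z \<in> cfgs V d" "mrg W1 x' z \<in> cfgs V d" using mrg_cfgs[OF x z U] mrg_cfgs[OF x' z U] by auto
  have "\<And>X. X \<in> S \<Longrightarrow> h X (mrg W1 x' z) (mrg W1 x z) = cnj (h X (mrg W1 x z) (mrg W1 x' z))"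
    using her m unfolding hermitian_def by blast
  then show "Kp W1 c S h a z x' x = cnj (Kp W1 c S h a z x x')"
    unfolding Kp_def by (simp add: cnj_sum)
qed

definition Rho :: "nat set \<Rightarrow> (nat \<Rightarrow> nat) \<Rightarrow> op \<Rightarrow> op \<Rightarrow> complex" where
  "Rho W d K L = mtrace W d (mmul W d (mexp W d L) (mexp W d K)) / mtrace W d (mexp W d K)"

lemma Rho_pos:
  assumes "finite W" "cfgs W d \<noteq> {}" "hermitian W d K" "hermitian W d L"
  shows "Im (Rho W d K L) = 0 \<and> Re (Rho W d K L) > 0"
proof -
  have her0: "hermitian W d (\<lambda>s t. 0)" unfolding hermitian_def by simp
  have n: "Im (mtrace W d (mmul W d (mexp W d L) (mexp W d K))) = 0 \<and> Re (mtrace W d (mmul W d (mexp W d L) (mexp W d K))) > 0"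
    by (rule trace_pos[OF assms])
  have e: "mtrace W d (mmul W d (mexp W d (\<lambda>s t. 0)) (mexp W d K)) = mtrace W d (mexp W d K)"
  proof (rule mtrace_cong)
    fix s assume "s \<in> cfgs W d"
    then show "mmul W d (mexp W d (\<lambda>s t. 0)) (mexp W d K) s s = mexp W d K s s"
      using mmul_mone_left[OF assms(1)] by (simp add: mexp_zero[abs_def])
  qed
  have dd: "Im (mtrace W d (mexp W d K)) = 0 \<and> Re (mtrace W d (mexp W d K)) > 0"
    using trace_pos[OF assms(1,2,3) her0] e by simp
  show ?thesis using n dd unfolding Rho_def by (simp add: Im_divide Re_divide)
qed

lemma core:
  assumes fin: "finite V" and U: "W1 \<union> W2 = V" and D: "W1 \<inter> W2 = {}"
    and x0: "x0 \<in> cfgs W1 d" and y0: "y0 \<in> cfgs W2 d"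
    and finE: "finite E" and S: "S1 \<union> S2 \<subseteq> E" and SD: "S1 \<inter> S2 = {}"
    and a0: "\<And>X. X \<notin> S1 \<union> S2 \<Longrightarrow> a X = 0" and b0: "\<And>X. X \<notin> S1 \<union> S2 \<Longrightarrow> b X = 0"
    and c1: "\<And>X. X \<in> S1 \<Longrightarrow> X \<subseteq> W1 \<and> supported_on V d X (h X) \<and> supported_on V d X (f X) \<and> hermitian V d (h X) \<and> hermitian V d (f X)"
    and c2: "\<And>X. X \<in> S2 \<Longrightarrow> X \<subseteq> W2 \<and> supported_on V d X (h X) \<and> supported_on V d X (f X) \<and> hermitian V d (h X) \<and> hermitian V d (f X)"
  shows "ln (Re (Rho V d (\<lambda>s t. of_real bb * (\<Sum>X\<in>E. of_real (a X) * h X s t)) (\<lambda>s t. of_real tt * (\<Sum>X\<in>E. of_real (b X) * f X s t))))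
    = ln (Re (Rho W1 d (Kp W1 bb S1 h a y0) (Kp W1 tt S1 f b y0))) + ln (Re (Rho W2 d (Kp W2 bb S2 h a x0) (Kp W2 tt S2 f b x0)))"
proof -
  define K where "K = (\<lambda>s t. of_real bb * (\<Sum>X\<in>E. of_real (a X) * h X s t))"
  define L where "L = (\<lambda>s t. of_real tt * (\<Sum>X\<in>E. of_real (b X) * f X s t))"
  define K1 where "K1 = Kp W1 bb S1 h a y0"
  define K2 where "K2 = Kp W2 bb S2 h a x0"
  define L1 where "L1 = Kp W1 tt S1 f b y0"
  define L2 where "L2 = Kp W2 tt S2 f b x0"
  have U': "W2 \<union> W1 = V" using U by auto
  have fin1: "finite W1" and fin2: "finite W2" using fin U by auto
  have ne1: "cfgs W1 d \<noteq> {}" using x0 by auto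
  have ne2: "cfgs W2 d \<noteq> {}" using y0 by auto
  have hK1: "hermitian W1 d K1" unfolding K1_def by (rule hermitian_Kp[OF U y0]) (use c1 in auto)
  have hL1: "hermitian W1 d L1" unfolding L1_def by (rule hermitian_Kp[OF U y0]) (use c1 in auto)
  have hK2: "hermitian W2 d K2" unfolding K2_def by (rule hermitian_Kp[OF U' x0]) (use c2 in auto)
  have hL2: "hermitian W2 d L2" unfolding L2_def by (rule hermitian_Kp[OF U' x0]) (use c2 in auto)
  have eK: "mexp V d K s t = tens W1 W2 (mexp W1 d K1) (mexp W2 d K2) s t" if s: "s \<in> cfgs V d" and t: "t \<in> cfgs V d" for s t
  proof -
    have "mexp V d K s t = mexp V d (\<lambda>s t. tens W1 W2 K1 mone s t + tens W1 W2 mone K2 s t) s t"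
    proof (rule mexp_cong[OF _ s t])
      fix s t assume s: "s \<in> cfgs V d" and t: "t \<in> cfgs V d"
      show "K s t = tens W1 W2 K1 mone s t + tens W1 W2 mone K2 s t"
        unfolding K_def K1_def K2_def
        apply (rule hop_split[OF finE S SD a0 U D x0 y0 s t])
        using c1 c2 by auto
    qed
    also have "\<dots> = tens W1 W2 (mexp W1 d K1) (mexp W2 d K2) s t" by (rule mexp_tens_sum[OF fin U D s t])
    finally show ?thesis .
  qed
  have eL: "mexp V d L s t = tens W1 W2 (mexp W1 d L1) (mexp W2 d L2) s t" if s: "s \<in> cfgs V d" and t: "t \<in> cfgs V d" for s t
  proof -
    have "mexp V d L s t = mexp V d (\<lambda>s t. tens W1 W2 L1 mone s t + tens W1 W2 mone L2 s t) s t"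
    proof (rule mexp_cong[OF _ s t])
      fix s t assume s: "s \<in> cfgs V d" and t: "t \<in> cfgs V d"
      show "L s t = tens W1 W2 L1 mone s t + tens W1 W2 mone L2 s t"
        unfolding L_def L1_def L2_def
        apply (rule hop_split[OF finE S SD b0 U D x0 y0 s t])
        using c1 c2 by auto
    qed
    also have "\<dots> = tens W1 W2 (mexp W1 d L1) (mexp W2 d L2) s t" by (rule mexp_tens_sum[OF fin U D s t])
    finally show ?thesis .
  qed
  have num: "mtrace V d (mmul V d (mexp V d L) (mexp V d K))
     = mtrace W1 d (mmul W1 d (mexp W1 d L1) (mexp W1 d K1)) * mtrace W2 d (mmul W2 d (mexp W2 d L2) (mexp W2 d K2))"
  proof -
    have "mtrace V d (mmul V d (mexp V d L) (mexp V d K))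
       = mtrace V d (mmul V d (tens W1 W2 (mexp W1 d L1) (mexp W2 d L2)) (tens W1 W2 (mexp W1 d K1) (mexp W2 d K2)))"
      by (intro mtrace_cong mmul_cong) (auto simp: eK eL)
    also have "\<dots> = mtrace V d (tens W1 W2 (mmul W1 d (mexp W1 d L1) (mexp W1 d K1)) (mmul W2 d (mexp W2 d L2) (mexp W2 d K2)))"
      by (intro mtrace_cong tens_mmul[OF U D])
    also have "\<dots> = mtrace W1 d (mmul W1 d (mexp W1 d L1) (mexp W1 d K1)) * mtrace W2 d (mmul W2 d (mexp W2 d L2) (mexp W2 d K2))"
      by (rule tens_trace[OF U D])
    finally show ?thesis .
  qed
  have den: "mtrace V d (mexp V d K) = mtrace W1 d (mexp W1 d K1) * mtrace W2 d (mexp W2 d K2)"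
  proof -
    have "mtrace V d (mexp V d K) = mtrace V d (tens W1 W2 (mexp W1 d K1) (mexp W2 d K2))"
      by (intro mtrace_cong) (auto simp: eK)
    also have "\<dots> = mtrace W1 d (mexp W1 d K1) * mtrace W2 d (mexp W2 d K2)"
      by (rule tens_trace[OF U D])
    finally show ?thesis .
  qed
  have R: "Rho V d K L = Rho W1 d K1 L1 * Rho W2 d K2 L2"
    unfolding Rho_def num den by simp
  have p1: "Im (Rho W1 d K1 L1) = 0 \<and> Re (Rho W1 d K1 L1) > 0" by (rule Rho_pos[OF fin1 ne1 hK1 hL1])
  have p2: "Im (Rho W2 d K2 L2) = 0 \<and> Re (Rho W2 d K2 L2) > 0" by (rule Rho_pos[OF fin2 ne2 hK2 hL2])
  have "ln (Re (Rho V d K L)) = ln (Re (Rho W1 d K1 L1) * Re (Rho W2 d K2 L2))"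
    using R p1 p2 by simp
  also have "\<dots> = ln (Re (Rho W1 d K1 L1)) + ln (Re (Rho W2 d K2 L2))"
    using p1 p2 by (simp add: ln_mult)
  finally show ?thesis unfolding K_def L_def K1_def K2_def L1_def L2_def .
qed

type_synonym rfun = "(nat set \<Rightarrow> real) \<Rightarrow> (nat set \<Rightarrow> real) \<Rightarrow> real"

definition pdt :: "bool \<times> nat set \<Rightarrow> rfun \<Rightarrow> rfun" where
  "pdt c = (if fst c then pda (snd c) else pdb (snd c))"

definition DD :: "(bool \<times> nat set) list \<Rightarrow> rfun \<Rightarrow> rfun" where
  "DD L F = foldr pdt L F"

definition indep :: "bool \<times> nat set \<Rightarrow> rfun \<Rightarrow> bool" where
  "indep c F = (if fst c then (\<forall>a b t. F (a(snd c := t)) b = F a b) else (\<forall>a b t. F a (b(snd c := t)) = F a b))"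

lemma Da_DD: "Da w G = DD (map (Pair True) w) G"
  unfolding Da_def DD_def by (induction w) (auto simp: pdt_def)

lemma Db_DD: "Db w G = DD (map (Pair False) w) G"
  unfolding Db_def DD_def by (induction w) (auto simp: pdt_def)

lemma DaDb_DD: "Da w2 (Db w1 F) = DD (map (Pair True) w2 @ map (Pair False) w1) F"
  unfolding Da_DD Db_DD DD_def by simp

lemma DD_Cons: "DD (e # L) F = pdt e (DD L F)"
  unfolding DD_def by simp

lemma DD_append1: "DD (L @ [x]) F = DD L (pdt x F)"
  unfolding DD_def by simp

lemma indep_pdt_zero: "indep c F \<Longrightarrow> pdt c F = (\<lambda>a b. 0)"
  unfolding indep_def pdt_def pda_def pdb_def
  by (cases "fst c") (auto intro!: ext simp: deriv_const)

lemma pdt_zero: "pdt e (\<lambda>a b. 0) = (\<lambda>a b. 0)"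
  unfolding pdt_def pda_def pdb_def by (auto intro!: ext simp: deriv_const)

lemma DD_zero: "DD L (\<lambda>a b. 0) = (\<lambda>a b. 0)"
  by (induction L) (auto simp: DD_def pdt_zero)

lemma indep_zero: "indep c (\<lambda>a b. 0)"
  unfolding indep_def by simp

lemma indep_pdt:
  assumes "indep c F" shows "indep c (pdt e F)"
proof (cases "e = c")
  case True
  then show ?thesis using indep_pdt_zero[OF assms] indep_zero by simp
next
  case False
  obtain p X where c: "c = (p, X)" by (cases c)
  obtain q Y where e: "e = (q, Y)" by (cases e)
  show ?thesis
  proof (cases p)
    case True
    then have F: "\<And>a b t. F (a(X := t)) b = F a b" using assms c by (simp add: indep_def)
    show ?thesis
    proof (cases q)
      case True
      with False c e \<open>p\<close> have "X \<noteq> Y" by auto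
      then have "\<And>a b t u. F ((a(X := t))(Y := u)) b = F (a(Y := u)) b"
        using F by (metis fun_upd_twist)
      then show ?thesis using c e \<open>p\<close> True \<open>X \<noteq> Y\<close> by (simp add: indep_def pdt_def pda_def)
    next
      case False
      then show ?thesis using c e \<open>p\<close> F by (simp add: indep_def pdt_def pdb_def)
    qed
  next
    case False
    then have F: "\<And>a b t. F a (b(X := t)) = F a b" using assms c by (simp add: indep_def)
    show ?thesis
    proof (cases q)
      case True
      then show ?thesis using c e \<open>\<not> p\<close> F by (simp add: indep_def pdt_def pda_def)
    next
      case q: False
      with \<open>e \<noteq> c\<close> c e \<open>\<not> p\<close> have "X \<noteq> Y" by auto
      then have "\<And>a b t u. F a ((b(X := t))(Y := u)) = F a (b(Y := u))"
        using F by (metis fun_upd_twist)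
      then show ?thesis using c e \<open>\<not> p\<close> q \<open>X \<noteq> Y\<close> by (simp add: indep_def pdt_def pdb_def)
    qed
  qed
qed

lemma indep_DD: "indep c F \<Longrightarrow> indep c (DD L F)"
  by (induction L) (auto simp: DD_Cons indep_pdt, simp add: DD_def)

lemma DD_indep_zero: "c \<in> set L \<Longrightarrow> indep c F \<Longrightarrow> DD L F = (\<lambda>a b. 0)"
proof (induction L)
  case Nil then show ?case by simp
next
  case (Cons e L)
  show ?case
  proof (cases "c \<in> set L")
    case True
    then show ?thesis using Cons by (simp add: DD_Cons pdt_zero)
  next
    case False
    then have "e = c" using Cons by auto
    then show ?thesis using indep_pdt_zero[OF indep_DD[OF Cons.prems(2)]] by (simp add: DD_Cons)
  qed
qed

lemma deriv_add_const: "deriv (\<lambda>t. k + f t) x = deriv f x"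
proof -
  have "((\<lambda>t. k + f t) has_field_derivative D) (at x) = (f has_field_derivative D) (at x)" for D
  proof
    assume "((\<lambda>t. k + f t) has_field_derivative D) (at x)"
    from DERIV_diff[OF this DERIV_const[of k]] show "(f has_field_derivative D) (at x)" by simp
  next
    assume "(f has_field_derivative D) (at x)"
    from DERIV_add[OF DERIV_const[of k] this] show "((\<lambda>t. k + f t) has_field_derivative D) (at x)" by simp
  qed
  then show ?thesis unfolding deriv_def by simp
qed

lemma pdt_add_indep: "indep c G1 \<Longrightarrow> pdt c (\<lambda>a b. G1 a b + G2 a b) = pdt c G2"
  unfolding indep_def pdt_def pda_def pdb_def
  by (cases "fst c") (auto intro!: ext simp: deriv_add_const)

lemma DD_add:
  assumes CD: "C1 \<inter> C2 = {}" and i1: "\<And>c. c \<notin> C1 \<Longrightarrow> indep c G1" and i2: "\<And>c. c \<notin> C2 \<Longrightarrow> indep c G2"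
    and c1: "c1 \<in> set L" "c1 \<in> C1" and c2: "c2 \<in> set L" "c2 \<in> C2"
  shows "DD L (\<lambda>a b. G1 a b + G2 a b) = (\<lambda>a b. 0)"
proof -
  obtain L' x where L: "L = L' @ [x]" using c1 by (cases L rule: rev_cases) auto
  show ?thesis
  proof (cases "x \<in> C1")
    case True
    then have "x \<notin> C2" using CD by auto
    then have "pdt x (\<lambda>a b. G1 a b + G2 a b) = pdt x G1"
      using pdt_add_indep[OF i2[of x], of G1] by (simp add: add.commute)
    moreover have "c2 \<in> set L'" using c2 True CD L by auto
    moreover have "indep c2 (pdt x G1)" using c2 CD by (intro indep_pdt i1) auto
    ultimately show ?thesis unfolding L DD_append1 by (simp add: DD_indep_zero)
  next
    case False
    note x1 = False
    show ?thesis
    proof (cases "x \<in> C2")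
      case True
      then have "pdt x (\<lambda>a b. G1 a b + G2 a b) = pdt x G2"
        using pdt_add_indep[OF i1[OF x1]] by simp
      moreover have "c1 \<in> set L'" using c1 x1 L by auto
      moreover have "indep c1 (pdt x G2)" using c1 CD by (intro indep_pdt i2) auto
      ultimately show ?thesis unfolding L DD_append1 by (simp add: DD_indep_zero)
    next
      case False
      have "indep x (\<lambda>a b. G1 a b + G2 a b)"
        using i1[OF x1] i2[OF False] unfolding indep_def by (simp split: if_splits)
      then show ?thesis unfolding L DD_append1 by (simp add: indep_pdt_zero DD_zero)
    qed
  qed
qed

definition okS :: "nat set set \<Rightarrow> (nat set \<Rightarrow> real) \<Rightarrow> (nat set \<Rightarrow> real) \<Rightarrow> bool" where
  "okS S a b = ((\<forall>X. X \<notin> S \<longrightarrow> a X = 0) \<and> (\<forall>X. X \<notin> S \<longrightarrow> b X = 0))"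

lemma DD_restrict:
  assumes eq: "\<And>a b. okS S a b \<Longrightarrow> F a b = F' a b" and L: "\<forall>c\<in>set L. snd c \<in> S"
  shows "okS S a b \<Longrightarrow> DD L F a b = DD L F' a b"
  using L
proof (induction L arbitrary: a b)
  case Nil then show ?case using eq by (simp add: DD_def)
next
  case (Cons e L)
  obtain p X where e: "e = (p, X)" by (cases e)
  have X: "X \<in> S" using Cons.prems e by auto
  have ih: "\<And>a b. okS S a b \<Longrightarrow> DD L F a b = DD L F' a b" using Cons by auto
  have oka: "okS S (a(X := t)) b" and okb: "okS S a (b(X := t))" for t
    using Cons.prems(1) X unfolding okS_def by auto
  show ?case unfolding DD_Cons e pdt_def pda_def pdb_def using ih oka okb by simp
qed

lemma DD_linear:
  assumes L: "2 \<le> length L" and Lset: "\<forall>c\<in>set L. snd c = Z"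
  shows "DD L (\<lambda>a b. \<kappa> * b Z) = (\<lambda>a b. 0)"
proof -
  obtain L' x where Lx: "L = L' @ [x]" using L by (cases L rule: rev_cases) auto
  obtain c where c: "c \<in> set L'" using L Lx by (cases L') auto
  have xZ: "snd x = Z" using Lset Lx by auto
  show ?thesis
  proof (cases "fst x")
    case True
    then have "indep x (\<lambda>a b. \<kappa> * b Z)" unfolding indep_def by simp
    then show ?thesis unfolding Lx DD_append1 by (simp add: indep_pdt_zero DD_zero)
  next
    case False
    then have "pdt x (\<lambda>a b. \<kappa> * b Z) = (\<lambda>a b. \<kappa>)"
      using xZ unfolding pdt_def pdb_def by (auto intro!: ext simp: deriv_linear)
    moreover have "indep c (\<lambda>a b. \<kappa>)" unfolding indep_def by simp
    ultimately show ?thesis unfolding Lx DD_append1 using c by (simp add: DD_indep_zero)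
  qed
qed

lemma cfgs_empty: "cfgs {} d = {\<lambda>_. undefined}"
  unfolding cfgs_def by simp

lemma mpow_single: "mpow {} d K k (\<lambda>_. undefined) (\<lambda>_. undefined) = K (\<lambda>_. undefined) (\<lambda>_. undefined) ^ k"
  by (induction k) (simp_all add: mmul_def cfgs_empty mone_def)

lemma mexp_single: "mexp {} d K (\<lambda>_. undefined) (\<lambda>_. undefined) = exp (K (\<lambda>_. undefined) (\<lambda>_. undefined))"
  unfolding mexp_def exp_def mpow_single
  by (simp add: scaleR_conv_of_real divide_inverse mult.commute)

lemma Rho_single: "Rho {} d K L = exp (L (\<lambda>_. undefined) (\<lambda>_. undefined))"
  unfolding Rho_def mtrace_def mmul_def cfgs_empty by (simp add: mexp_single[unfolded cfgs_empty])

lemma Rho_zero: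
  assumes "finite W" "cfgs W d \<noteq> {}"
  shows "Rho W d (\<lambda>_ _. 0) (\<lambda>_ _. 0) = 1"
proof -
  have "mtrace W d (mmul W d (mexp W d (\<lambda>_ _. 0)) (mexp W d (\<lambda>_ _. 0))) = mtrace W d mone"
    by (intro mtrace_cong) (simp add: mexp_zero[abs_def] mmul_mone_left assms(1))
  moreover have "mtrace W d (mexp W d (\<lambda>_ _. 0)) = mtrace W d mone"
    by (simp add: mexp_zero[abs_def])
  moreover have "mtrace W d mone = of_nat (card (cfgs W d))"
    unfolding mtrace_def mone_def by simp
  moreover have "card (cfgs W d) \<noteq> 0" using assms finite_cfgs by auto
  ultimately show ?thesis unfolding Rho_def by simp
qed

lemma Kp_empty: "Kp W c {} h a z = (\<lambda>_ _. 0)"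
  unfolding Kp_def by simp

lemma Kp_upd: "X \<notin> S \<Longrightarrow> Kp W c S h (a(X := t)) z = Kp W c S h a z"
  unfolding Kp_def by (intro ext) (auto intro!: sum.cong)

definition Fn where
  "Fn V d k h f \<beta> \<tau> = (\<lambda>a b.
           let Ea = mexp V d (\<lambda>s t. - of_real \<beta> * Hop V k h a s t);
               \<rho> = (\<lambda>s t. Ea s t / mtrace V d Ea);
               Fb = mexp V d (\<lambda>s t. - of_real \<tau> * Hop V k f b s t)
           in ln (Re (mtrace V d (mmul V d Fb \<rho>))))"

lemma Fn_eq: "Fn V d k h f \<beta> \<tau> a b = ln (Re (Rho V d (\<lambda>s t. of_real (-\<beta>) * (\<Sum>X\<in>Ek V k. of_real (a X) * h X s t))
     (\<lambda>s t. of_real (-\<tau>) * (\<Sum>X\<in>Ek V k. of_real (b X) * f X s t))))"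
  unfolding Fn_def Let_def Rho_def Hop_def mtrace_def mmul_def
  by (simp add: sum_divide_distrib)

lemma decomp:
  assumes w: "w = u1 + u2" and ne: "u1 \<noteq> {#}" "u2 \<noteq> {#}" and dj: "Vw u1 \<inter> Vw u2 = {}"
    and X0: "X0 \<in># u1" "X0 \<noteq> {}" and sub: "\<forall>X\<in>#w. X \<subseteq> V"
  shows "\<exists>W1 \<subseteq> V. (\<exists>X\<in>#w. X \<noteq> {} \<and> X \<subseteq> W1) \<and> (\<exists>Y\<in>#w. \<not> (Y \<noteq> {} \<and> Y \<subseteq> W1))
     \<and> (\<forall>Z\<in>#w. \<not> (Z \<noteq> {} \<and> Z \<subseteq> W1) \<longrightarrow> Z \<subseteq> V - W1)"
proof (intro exI conjI)
  show "Vw u1 \<subseteq> V" using sub w unfolding Vw_def by auto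
  show "\<exists>X\<in>#w. X \<noteq> {} \<and> X \<subseteq> Vw u1" using X0 w unfolding Vw_def by auto
  obtain Y where Y: "Y \<in># u2" using ne by (meson multiset_nonemptyE)
  have "Y \<subseteq> Vw u2" using Y unfolding Vw_def by auto
  then have "\<not> (Y \<noteq> {} \<and> Y \<subseteq> Vw u1)" using dj by auto
  then show "\<exists>Y\<in>#w. \<not> (Y \<noteq> {} \<and> Y \<subseteq> Vw u1)" using Y w by auto
  show "\<forall>Z\<in>#w. \<not> (Z \<noteq> {} \<and> Z \<subseteq> Vw u1) \<longrightarrow> Z \<subseteq> V - Vw u1"
  proof (intro ballI impI)
    fix Z assume Z: "Z \<in># w" and nz: "\<not> (Z \<noteq> {} \<and> Z \<subseteq> Vw u1)"
    show "Z \<subseteq> V - Vw u1"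
    proof (cases "Z \<in># u1")
      case True
      then have "Z \<subseteq> Vw u1" unfolding Vw_def by auto
      then have "Z = {}" using nz by auto
      then show ?thesis by simp
    next
      case False
      then have "Z \<in># u2" using Z w by auto
      then have "Z \<subseteq> Vw u2" unfolding Vw_def by auto
      then show ?thesis using dj sub Z by auto
    qed
  qed
qed

lemma zcfg: "W \<subseteq> V \<Longrightarrow> \<forall>v\<in>V. d v > 0 \<Longrightarrow> restrict (\<lambda>_. 0::nat) W \<in> cfgs W d"
  unfolding cfgs_def by auto

lemma main:
  assumes fin: "finite V" and dpos: "\<forall>v\<in>V. d v > 0"
    and h: "\<forall>X\<in>Ek V k. hermitian V d (h X) \<and> supported_on V d X (h X)"
    and f: "\<forall>X\<in>Ek V k. hermitian V d (f X) \<and> supported_on V d X (f X)"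
    and wsub: "set w1 \<union> set w2 \<subseteq> Ek V k"
    and nconn: "\<not> connected_cluster (mset w1 + mset w2)"
  shows "Da w2 (Db w1 (Fn V d k h f \<beta> \<tau>)) (\<lambda>_. 0) (\<lambda>_. 0) = 0"
proof -
  define S where "S = set w1 \<union> set w2"
  define L where "L = map (Pair True) w2 @ map (Pair False) w1"
  have DL: "Da w2 (Db w1 (Fn V d k h f \<beta> \<tau>)) = DD L (Fn V d k h f \<beta> \<tau>)" by (simp add: L_def DaDb_DD)
  have Lset: "\<forall>c\<in>set L. snd c \<in> S" by (auto simp: L_def S_def)
  have Lcov: "\<exists>c\<in>set L. snd c = X" if "X \<in> S" for X using that by (force simp: L_def S_def)
  have ok0: "okS S (\<lambda>_. 0) (\<lambda>_. 0)" by (simp add: okS_def)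
  have finE: "finite (Ek V k)" by (rule finite_subset[of _ "Pow V"]) (auto simp: Ek_def fin)
  have SE: "S \<subseteq> Ek V k" using wsub by (simp add: S_def)
  obtain u1 u2 where w: "mset w1 + mset w2 = u1 + u2" and nu: "u1 \<noteq> {#}" "u2 \<noteq> {#}" and dj: "Vw u1 \<inter> Vw u2 = {}"
    using nconn unfolding connected_cluster_def by blast
  have setw: "set_mset (mset w1 + mset w2) = S" by (simp add: S_def)
  have subV: "\<forall>X\<in>#mset w1 + mset w2. X \<subseteq> V" using wsub by (auto simp: Ek_def)
  have hX: "hermitian V d (h X) \<and> supported_on V d X (h X)" if "X \<in> S" for X using h SE that by auto
  have fX: "hermitian V d (f X) \<and> supported_on V d X (f X)" if "X \<in> S" for X using f SE that by auto
  show ?thesis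
  proof (cases "\<exists>X\<in>S. X \<noteq> {}")
    case True
    then obtain X0 where X0: "X0 \<in> S" "X0 \<noteq> {}" by blast
    have "\<exists>W1 \<subseteq> V. (\<exists>X\<in>#mset w1 + mset w2. X \<noteq> {} \<and> X \<subseteq> W1) \<and> (\<exists>Y\<in>#mset w1 + mset w2. \<not> (Y \<noteq> {} \<and> Y \<subseteq> W1))
     \<and> (\<forall>Z\<in>#mset w1 + mset w2. \<not> (Z \<noteq> {} \<and> Z \<subseteq> W1) \<longrightarrow> Z \<subseteq> V - W1)"
    proof (cases "X0 \<in># u1")
      case True
      then show ?thesis by (rule decomp[OF w nu dj _ X0(2) subV])
    next
      case False
      then have "X0 \<in># u2" using X0 w setw by (metis Un_iff set_mset_union)
      moreover have "mset w1 + mset w2 = u2 + u1" using w by (simp add: add.commute)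
      moreover have "Vw u2 \<inter> Vw u1 = {}" using dj by auto
      ultimately show ?thesis using decomp[OF _ nu(2) nu(1) _ _ X0(2) subV] by blast
    qed
    then obtain W1 where W1: "W1 \<subseteq> V" and e1: "\<exists>X\<in>S. X \<noteq> {} \<and> X \<subseteq> W1"
      and e2: "\<exists>Y\<in>S. \<not> (Y \<noteq> {} \<and> Y \<subseteq> W1)" and e3: "\<forall>Z\<in>S. \<not> (Z \<noteq> {} \<and> Z \<subseteq> W1) \<longrightarrow> Z \<subseteq> V - W1"
      using setw by auto
    define W2 where "W2 = V - W1"
    define S1 where "S1 = {X\<in>S. X \<noteq> {} \<and> X \<subseteq> W1}"
    define S2 where "S2 = S - S1"
    define x0 where "x0 = restrict (\<lambda>_. 0::nat) W1"
    define y0 where "y0 = restrict (\<lambda>_. 0::nat) W2"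
    have U: "W1 \<union> W2 = V" and D: "W1 \<inter> W2 = {}" using W1 by (auto simp: W2_def)
    have x0: "x0 \<in> cfgs W1 d" unfolding x0_def using zcfg[OF W1 dpos] .
    have y0: "y0 \<in> cfgs W2 d" unfolding y0_def using zcfg[of W2 V d] dpos by (auto simp: W2_def)
    have S12: "S1 \<union> S2 \<subseteq> Ek V k" "S1 \<inter> S2 = {}" "S1 \<union> S2 = S" using SE by (auto simp: S1_def S2_def)
    define G1 where "G1 = (\<lambda>a b. ln (Re (Rho W1 d (Kp W1 (-\<beta>) S1 h a y0) (Kp W1 (-\<tau>) S1 f b y0))))"
    define G2 where "G2 = (\<lambda>a b. ln (Re (Rho W2 d (Kp W2 (-\<beta>) S2 h a x0) (Kp W2 (-\<tau>) S2 f b x0))))"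
    have eq: "Fn V d k h f \<beta> \<tau> a b = G1 a b + G2 a b" if ok: "okS S a b" for a b
      unfolding Fn_eq G1_def G2_def
    proof (rule core[OF fin U D x0 y0 finE S12(1,2)])
      show "\<And>X. X \<notin> S1 \<union> S2 \<Longrightarrow> a X = 0" "\<And>X. X \<notin> S1 \<union> S2 \<Longrightarrow> b X = 0"
        using ok S12(3) unfolding okS_def by auto
      show "\<And>X. X \<in> S1 \<Longrightarrow> X \<subseteq> W1 \<and> supported_on V d X (h X) \<and> supported_on V d X (f X) \<and> hermitian V d (h X) \<and> hermitian V d (f X)"
        using hX fX by (auto simp: S1_def)
      show "\<And>X. X \<in> S2 \<Longrightarrow> X \<subseteq> W2 \<and> supported_on V d X (h X) \<and> supported_on V d X (f X) \<and> hermitian V d (h X) \<and> hermitian V d (f X)"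
        using hX fX e3 by (auto simp: S1_def S2_def W2_def)
    qed
    have r: "DD L (Fn V d k h f \<beta> \<tau>) (\<lambda>_. 0) (\<lambda>_. 0) = DD L (\<lambda>a b. G1 a b + G2 a b) (\<lambda>_. 0) (\<lambda>_. 0)"
      by (rule DD_restrict[OF _ Lset ok0]) (rule eq)
    have z: "DD L (\<lambda>a b. G1 a b + G2 a b) = (\<lambda>a b. 0)"
    proof -
      obtain X where X: "X \<in> S1" using e1 by (auto simp: S1_def)
      obtain Y where Y: "Y \<in> S" "Y \<notin> S1" using e2 by (auto simp: S1_def)
      obtain c1 where c1: "c1 \<in> set L" "snd c1 = X" using Lcov[of X] X by (auto simp: S1_def)
      obtain c2 where c2: "c2 \<in> set L" "snd c2 = Y" using Lcov[of Y] Y by auto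
      have CD: "{c. snd c \<in> S1} \<inter> {c. snd c \<notin> S1} = {}" by auto
      have i1: "indep c G1" if "c \<notin> {c. snd c \<in> S1}" for c
        using that unfolding indep_def G1_def by (simp add: Kp_upd)
      have i2: "indep c G2" if "c \<notin> {c. snd c \<notin> S1}" for c
      proof -
        have "snd c \<notin> S2" using that by (auto simp: S2_def)
        then show ?thesis unfolding indep_def G2_def by (simp add: Kp_upd)
      qed
      have m1: "c1 \<in> {c. snd c \<in> S1}" using c1 X by auto
      have m2: "c2 \<in> {c. snd c \<notin> S1}" using c2 Y by auto
      show ?thesis by (rule DD_add[OF CD i1 i2 c1(1) m1 c2(1) m2])
    qed
    show ?thesis using DL r z by simp
  next
    case False
    then have S0: "S \<subseteq> {{}}" by auto
    have Sne: "S \<noteq> {}" using nu w setw by (metis Un_empty set_mset_eq_empty_iff set_mset_union)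
    then have S1: "S = {{}}" using S0 by auto
    define e :: cfg where "e = (\<lambda>_. undefined)"
    define y0 where "y0 = restrict (\<lambda>_. 0::nat) V"
    have x0: "e \<in> cfgs {} d" by (simp add: e_def cfgs_empty)
    have y0: "y0 \<in> cfgs V d" unfolding y0_def using zcfg[of V V d] dpos by auto
    have mrg_e: "mrg {} e y0 = y0" by (simp add: mrg_def)
    define \<phi> where "\<phi> = f {} y0 y0"
    have phi: "Im \<phi> = 0"
    proof -
      have "hermitian V d (f {})" using fX S1 by auto
      then have "f {} y0 y0 = cnj (f {} y0 y0)" using y0 unfolding hermitian_def by blast
      then show ?thesis unfolding \<phi>_def by (metis cnj.simps(2) neg_equal_zero)
    qed
    define \<kappa> where "\<kappa> = - \<tau> * Re \<phi>"
    have eq: "Fn V d k h f \<beta> \<tau> a b = \<kappa> * b {}" if ok: "okS S a b" for a b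
    proof -
      have "Fn V d k h f \<beta> \<tau> a b = ln (Re (Rho {} d (Kp {} (-\<beta>) S h a y0) (Kp {} (-\<tau>) S f b y0)))
          + ln (Re (Rho V d (Kp V (-\<beta>) {} h a e) (Kp V (-\<tau>) {} f b e)))"
        unfolding Fn_eq
      proof (rule core[OF fin _ _ x0 y0 finE])
        show "S \<union> {} \<subseteq> Ek V k" "S \<inter> {} = {}" "{} \<union> V = V" "{} \<inter> V = {}" using SE by auto
        show "\<And>X. X \<notin> S \<union> {} \<Longrightarrow> a X = 0" "\<And>X. X \<notin> S \<union> {} \<Longrightarrow> b X = 0"
          using ok unfolding okS_def by auto
        show "\<And>X. X \<in> S \<Longrightarrow> X \<subseteq> {} \<and> supported_on V d X (h X) \<and> supported_on V d X (f X) \<and> hermitian V d (h X) \<and> hermitian V d (f X)"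
          using hX fX S1 by auto
        show "\<And>X. X \<in> {} \<Longrightarrow> X \<subseteq> V \<and> supported_on V d X (h X) \<and> supported_on V d X (f X) \<and> hermitian V d (h X) \<and> hermitian V d (f X)"
          by auto
      qed
      also have "ln (Re (Rho V d (Kp V (-\<beta>) {} h a e) (Kp V (-\<tau>) {} f b e))) = 0"
      proof -
        have "cfgs V d \<noteq> {}" using y0 by auto
        then have "Rho V d (\<lambda>_ _. 0) (\<lambda>_ _. 0) = 1" by (rule Rho_zero[OF fin])
        then show ?thesis by (simp add: Kp_empty)
      qed
      also have "Kp {} (-\<tau>) S f b y0 e e = of_real (\<kappa> * b {})"
      proof -
        have "Kp {} (-\<tau>) S f b y0 e e = of_real (-\<tau>) * (of_real (b {}) * \<phi>)"
          unfolding Kp_def S1 \<phi>_def using mrg_e by simp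
        also have "\<phi> = of_real (Re \<phi>)" using phi by (simp add: complex_eq_iff)
        finally show ?thesis unfolding \<kappa>_def by simp
      qed
      then have "Rho {} d (Kp {} (-\<beta>) S h a y0) (Kp {} (-\<tau>) S f b y0) = of_real (exp (\<kappa> * b {}))"
        unfolding Rho_single e_def[symmetric] by (simp flip: exp_of_real)
      finally show ?thesis by simp
    qed
    have len: "2 \<le> length L"
    proof -
      have "length L = size (mset w1 + mset w2)" by (simp add: L_def)
      also have "\<dots> = size (u1 + u2)" using w by simp
      moreover have "size u1 \<ge> 1" "size u2 \<ge> 1" using nu by (auto simp: Suc_le_eq nonempty_has_size)
      ultimately show ?thesis by (simp del: size_union add: size_union[of u1 u2])
    qed
    have Lset': "\<forall>c\<in>set L. snd c = {}" using Lset S1 by auto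
    have "DD L (Fn V d k h f \<beta> \<tau>) (\<lambda>_. 0) (\<lambda>_. 0) = DD L (\<lambda>a b. \<kappa> * b {}) (\<lambda>_. 0) (\<lambda>_. 0)"
      by (rule DD_restrict[OF _ Lset ok0]) (rule eq)
    also have "\<dots> = 0" using DD_linear[OF len Lset'] by simp
    finally show ?thesis using DL by simp
  qed
qed

theorem proposition1:
  fixes n k :: nat and d :: "nat \<Rightarrow> nat" and h f :: "nat set \<Rightarrow> op"
    and \<beta> \<tau> :: real and w1 w2 :: "nat set list" and m1 m2 :: nat
  defines "V \<equiv> {1..n}"
  assumes dpos: "\<forall>v\<in>V. d v > 0"
    and k: "k \<ge> 1"
    and h: "\<forall>X\<in>Ek V k. hermitian V d (h X) \<and> supported_on V d X (h X)"
    and f: "\<forall>X\<in>Ek V k. hermitian V d (f X) \<and> supported_on V d X (f X)"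
    and w1: "mset w1 \<in> clusters V k m1"
    and w2: "mset w2 \<in> clusters V k m2"
    and nc: "mset w1 + mset w2 \<notin> conn_clusters V k (m1 + m2)"
  shows "Da w2 (Db w1 (\<lambda>a b.
           let Ea = mexp V d (\<lambda>s t. - of_real \<beta> * Hop V k h a s t);
               \<rho> = (\<lambda>s t. Ea s t / mtrace V d Ea);
               Fb = mexp V d (\<lambda>s t. - of_real \<tau> * Hop V k f b s t)
           in ln (Re (mtrace V d (mmul V d Fb \<rho>)))))
         (\<lambda>_. 0) (\<lambda>_. 0) = 0"
proof -
  have fin: "finite V" unfolding V_def by simp
  have wsub: "set w1 \<union> set w2 \<subseteq> Ek V k" using w1 w2 by (auto simp: clusters_def)
  have incl: "mset w1 + mset w2 \<in> clusters V k (m1 + m2)" using w1 w2 by (auto simp: clusters_def)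
  have nconn: "\<not> connected_cluster (mset w1 + mset w2)" using nc incl by (simp add: conn_clusters_def)
  show ?thesis using main[OF fin dpos h f wsub nconn, of \<beta> \<tau>] unfolding Fn_def .
qed

end
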